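(* For any infinite graph $G$ it is possible to attach vertices to the edges of $G$ (i.e. subdivide edges by new vertices) to form a graph that is VEL-parabolic.
   Context: Graphs are simple, connected, locally finite. For an infinite graph with base vertex $v_0$, let $\Gamma_\infty$ be the family of infinite vertex paths (consecutive vertices adjacent or equal) from $v_0$ to infinity (visiting each vertex only finitely often). The graph is VEL-parabolic if $\sup_m(\inf_{\gamma\in\Gamma_\infty}\sum_{v\in\gamma}m(v))^2/\sum_v m(v)^2=\infty$, the supremum over vertex metrics $m:V\to[0,\infty)$ of finite non-zero area, and VEL-hyperbolic otherwise. *)

theory Defs
  imports "HOL-Analysis.Analysis" "HOL-Library.Extended_Nonnegative_Real"
begin

definition simple_graph :: "'a set \<Rightarrow> ('a \<Rightarrow> 'a \<Rightarrow> bool) \<Rightarrow> bool" where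
  "simple_graph V E \<longleftrightarrow>
     (\<forall>u v. E u v \<longrightarrow> u \<in> V \<and> v \<in> V) \<and>
     (\<forall>u v. E u v \<longrightarrow> E v u) \<and> (\<forall>v. \<not> E v v)"

definition connected_graph :: "'a set \<Rightarrow> ('a \<Rightarrow> 'a \<Rightarrow> bool) \<Rightarrow> bool" where
  "connected_graph V E \<longleftrightarrow> V \<noteq> {} \<and> (\<forall>u\<in>V. \<forall>v\<in>V. E\<^sup>*\<^sup>* u v)"

definition locally_finite :: "'a set \<Rightarrow> ('a \<Rightarrow> 'a \<Rightarrow> bool) \<Rightarrow> bool" where
  "locally_finite V E \<longleftrightarrow> (\<forall>v\<in>V. finite {w. E v w})"

definition graph :: "'a set \<Rightarrow> ('a \<Rightarrow> 'a \<Rightarrow> bool) \<Rightarrow> bool" where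
  "graph V E \<longleftrightarrow> simple_graph V E \<and> connected_graph V E \<and> locally_finite V E"

definition paths_to_infinity :: "'a set \<Rightarrow> ('a \<Rightarrow> 'a \<Rightarrow> bool) \<Rightarrow> 'a \<Rightarrow> (nat \<Rightarrow> 'a) set" where
  "paths_to_infinity V E v0 = {\<gamma>. \<gamma> 0 = v0 \<and> (\<forall>n. \<gamma> n \<in> V) \<and>
      (\<forall>n. \<gamma> (Suc n) = \<gamma> n \<or> E (\<gamma> n) (\<gamma> (Suc n))) \<and>
      (\<forall>v. finite {n. \<gamma> n = v})}"

definition ensum :: "('a \<Rightarrow> real) \<Rightarrow> 'a set \<Rightarrow> ennreal" where
  "ensum f A = (SUP F \<in> {F. finite F \<and> F \<subseteq> A}. (\<Sum>v\<in>F. ennreal (f v)))"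

definition m_length :: "('a \<Rightarrow> real) \<Rightarrow> (nat \<Rightarrow> 'a) \<Rightarrow> ennreal" where
  "m_length m \<gamma> = ensum m (range \<gamma>)"

definition area :: "'a set \<Rightarrow> ('a \<Rightarrow> real) \<Rightarrow> ennreal" where
  "area V m = ensum (\<lambda>v. (m v)\<^sup>2) V"

definition vertex_metrics :: "'a set \<Rightarrow> ('a \<Rightarrow> real) set" where
  "vertex_metrics V = {m. (\<forall>v\<in>V. 0 \<le> m v) \<and> 0 < area V m \<and> area V m < \<infinity>}"

definition VEL :: "'a set \<Rightarrow> ('a \<Rightarrow> 'a \<Rightarrow> bool) \<Rightarrow> 'a \<Rightarrow> ennreal" where
  "VEL V E v0 = (SUP m \<in> vertex_metrics V.
       (INF \<gamma> \<in> paths_to_infinity V E v0. m_length m \<gamma>)\<^sup>2 / area V m)"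

definition VEL_parabolic :: "'a set \<Rightarrow> ('a \<Rightarrow> 'a \<Rightarrow> bool) \<Rightarrow> 'a \<Rightarrow> bool" where
  "VEL_parabolic V E v0 \<longleftrightarrow> VEL V E v0 = \<infinity>"

text \<open>The i-th point from u
  (0 \<le> i \<le> n+1, n = k {u,v}) is u for i = 0, v for i = n+1, and otherwise the new vertex
  Inr {(u,i),(v,n+1-i)}, which is symmetric in the orientation of the edge.\<close>

definition sub_pt :: "('a set \<Rightarrow> nat) \<Rightarrow> 'a \<Rightarrow> 'a \<Rightarrow> nat \<Rightarrow> 'a + ('a \<times> nat) set" where
  "sub_pt k u v i = (let n = k {u, v} in
      if i = 0 then Inl u else if i = Suc n then Inl v
      else Inr {(u, i), (v, Suc n - i)})"

definition sub_V :: "'a set \<Rightarrow> ('a \<Rightarrow> 'a \<Rightarrow> bool) \<Rightarrow> ('a set \<Rightarrow> nat) \<Rightarrow> ('a + ('a \<times> nat) set) set" where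
  "sub_V V E k = Inl ` V \<union> {sub_pt k u v i | u v i. E u v \<and> 1 \<le> i \<and> i \<le> k {u, v}}"

definition sub_E :: "('a \<Rightarrow> 'a \<Rightarrow> bool) \<Rightarrow> ('a set \<Rightarrow> nat) \<Rightarrow> 'a + ('a \<times> nat) set \<Rightarrow> 'a + ('a \<times> nat) set \<Rightarrow> bool" where
  "sub_E E k x y \<longleftrightarrow> (\<exists>u v i. E u v \<and> i \<le> k {u, v} \<and> x = sub_pt k u v i \<and> y = sub_pt k u v (Suc i))"

end

theory Submission
  imports Defs
begin


lemma sub_pt_sym:
  assumes "i \<le> Suc (k {u,v})"
  shows "sub_pt k u v i = sub_pt k v u (Suc (k {u,v}) - i)"
  using assms by (auto simp: sub_pt_def Let_def insert_commute)

lemma sub_pt_Inl: "sub_pt k u v i = Inl a \<longleftrightarrow> (i = 0 \<and> a = u) \<or> (i \<noteq> 0 \<and> i = Suc (k {u,v}) \<and> a = v)"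
  by (auto simp: sub_pt_def Let_def)

lemma sub_pt_Inr: "1 \<le> i \<Longrightarrow> i \<le> k {u,v} \<Longrightarrow> sub_pt k u v i = Inr {(u,i),(v,Suc (k {u,v}) - i)}"
  by (auto simp: sub_pt_def Let_def)

lemma sub_pt_cases: "i \<le> Suc (k {u,v}) \<Longrightarrow>
  sub_pt k u v i = Inl u \<or> sub_pt k u v i = Inl v \<or> (\<exists>S. sub_pt k u v i = Inr S \<and> fst ` S = {u,v})"
  by (auto simp: sub_pt_def Let_def)

lemma sub_pt_inj_interior:
  assumes "u \<noteq> v" "u' \<noteq> v'" "1 \<le> i" "i \<le> k {u,v}" "i' \<le> Suc (k {u',v'})"
    and eq: "sub_pt k u v i = sub_pt k u' v' i'"
  shows "(u' = u \<and> v' = v \<and> i' = i) \<or> (u' = v \<and> v' = u \<and> i' = Suc (k {u,v}) - i)"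
proof -
  have L: "sub_pt k u v i = Inr {(u,i),(v,Suc (k {u,v}) - i)}" by (rule sub_pt_Inr[where k=k and u=u and v=v, OF assms(3,4)])
  have L': "sub_pt k u' v' i' = Inr {(u,i),(v,Suc (k {u,v}) - i)}" using L unfolding eq .
  have nl: "\<And>a. sub_pt k u' v' i' \<noteq> Inl a" unfolding L' by simp
  have "i' \<noteq> 0" "i' \<noteq> Suc (k {u',v'})" using nl[of u'] nl[of v'] unfolding sub_pt_Inl by auto
  hence "1 \<le> i'" "i' \<le> k {u',v'}" using assms by auto
  hence R: "sub_pt k u' v' i' = Inr {(u',i'),(v',Suc (k {u',v'}) - i')}" by (rule sub_pt_Inr[where k=k and u=u' and v=v'])
  have "{(u,i),(v,Suc (k {u,v}) - i)} = {(u',i'),(v',Suc (k {u',v'}) - i')}" using L' R by simp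
  hence "((u,i) = (u',i') \<and> (v,Suc (k {u,v}) - i) = (v',Suc (k {u',v'}) - i')) \<or>
         ((u,i) = (v',Suc (k {u',v'}) - i') \<and> (v,Suc (k {u,v}) - i) = (u',i'))"
    by (simp only: doubleton_eq_iff)
  thus ?thesis unfolding prod.inject by metis
qed

lemma sub_pt_inj:
  assumes "u \<noteq> v" "i \<le> Suc (k {u,v})" "j \<le> Suc (k {u,v})" "sub_pt k u v i = sub_pt k u v j"
  shows "i = j"
proof (cases "i = 0 \<or> i = Suc (k {u,v})")
  case True
  then consider "i = 0" | "i \<noteq> 0" "i = Suc (k {u,v})" by blast
  then show ?thesis
  proof cases
    case 1
    then have "sub_pt k u v j = Inl u" using assms(4) by (simp add: sub_pt_def)
    then show ?thesis using 1 assms(1) sub_pt_Inl[of k u v j u] by blast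
  next
    case 2
    then have "sub_pt k u v j = Inl v" using assms(4) by (simp add: sub_pt_def Let_def)
    then show ?thesis using 2 assms(1) sub_pt_Inl[of k u v j v] by blast
  qed
next
  case False
  then have "1 \<le> i" "i \<le> k {u,v}" using assms(2) by auto
  from sub_pt_inj_interior[OF assms(1) assms(1) this assms(3) assms(4)]
  show ?thesis using assms(1) by blast
qed

lemma inj_on_sub_pt: "u \<noteq> v \<Longrightarrow> inj_on (sub_pt k u v) {0..Suc (k {u,v})}"
  by (rule inj_onI) (auto intro: sub_pt_inj)

lemma sub_E_Inl_Inl:
  assumes "\<And>e. 1 \<le> k e" shows "\<not> sub_E E k (Inl a) (Inl b)"
proof
  assume "sub_E E k (Inl a) (Inl b)"
  then obtain u v i where "i \<le> k {u,v}" "Inl a = sub_pt k u v i" "Inl b = sub_pt k u v (Suc i)"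
    by (auto simp: sub_E_def)
  hence "i = 0" using sub_pt_Inl[of k u v i a] by auto
  with \<open>Inl b = sub_pt k u v (Suc i)\<close> have "Suc 0 = Suc (k {u,v})"
    using sub_pt_Inl[of k u v 1 b] by auto
  thus False using assms[of "{u,v}"] by simp
qed

definition cl :: "('a set \<Rightarrow> nat) \<Rightarrow> 'a \<Rightarrow> 'a \<Rightarrow> ('a + ('a \<times> nat) set) set" where
  "cl k u v = {Inl u, Inl v} \<union> {Inr S | S. fst ` S = {u,v}}"

lemma sub_pt_cl: "i \<le> Suc (k {u,v}) \<Longrightarrow> sub_pt k u v i \<in> cl k u v"
  using sub_pt_cases[of i k u v] unfolding cl_def by auto

lemma sub_E_cl:
  assumes "sub_E E k x y"
  shows "\<exists>u v. E u v \<and> x \<in> cl k u v \<and> y \<in> cl k u v"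
proof -
  obtain u v i where "E u v" "i \<le> k {u,v}" "x = sub_pt k u v i" "y = sub_pt k u v (Suc i)"
    using assms by (auto simp: sub_E_def)
  thus ?thesis using sub_pt_cl[of i k u v] sub_pt_cl[of "Suc i" k u v] by auto
qed

lemma sub_E_Inl:
  assumes "\<And>e. 1 \<le> k e" "sub_E E k x (Inl z) \<or> sub_E E k (Inl z) x"
  shows "\<exists>S. x = Inr S \<and> z \<in> fst ` S"
proof -
  obtain u v where uv: "x \<in> cl k u v" "Inl z \<in> cl k u v"
    using assms(2) sub_E_cl by metis
  have "\<not> (\<exists>a. x = Inl a)" using assms sub_E_Inl_Inl[of k E] by metis
  thus ?thesis using uv unfolding cl_def by auto
qed

lemma sub_E_Inr:
  assumes "sub_E E k x (Inr S') \<or> sub_E E k (Inr S') x"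
  shows "(\<exists>a. x = Inl a \<and> a \<in> fst ` S') \<or> (\<exists>S. x = Inr S \<and> fst ` S = fst ` S')"
proof -
  obtain u v where uv: "x \<in> cl k u v" "Inr S' \<in> cl k u v"
    using assms sub_E_cl by metis
  thus ?thesis unfolding cl_def by auto
qed

lemma sub_E_step:
  assumes kpos: "\<And>e. 1 \<le> k e" and irr: "\<And>u. \<not> E u u"
    and yz: "y \<noteq> z" and ij: "i \<le> Suc (k {y,z})" "j \<le> Suc (k {y,z})"
    and st: "sub_E E k (sub_pt k y z i) (sub_pt k y z j)"
  shows "j \<le> Suc i"
proof -
  obtain u v l where uv: "E u v" "l \<le> k {u,v}" and A: "sub_pt k y z i = sub_pt k u v l"
    and B: "sub_pt k y z j = sub_pt k u v (Suc l)"
    using st by (auto simp: sub_E_def)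
  have "u \<noteq> v" using uv irr by metis
  show ?thesis
  proof (cases "l = 0")
    case False
    have "(y = u \<and> z = v \<and> i = l) \<or> (y = v \<and> z = u \<and> i = Suc (k {u,v}) - l)"
      using sub_pt_inj_interior[where k=k and u=u and v=v and u'=y and v'=z and i=l and i'=i]
        \<open>u \<noteq> v\<close> yz False uv(2) ij(1) A by simp
    then show ?thesis
    proof
      assume h: "y = u \<and> z = v \<and> i = l"
      hence "sub_pt k y z j = sub_pt k y z (Suc i)" using B by simp
      moreover have "Suc i \<le> Suc (k {y,z})" using h uv(2) by simp
      ultimately show ?thesis using sub_pt_inj[where k=k and u=y and v=z and i=j and j="Suc i"] yz ij
        by simp
    next
      assume h: "y = v \<and> z = u \<and> i = Suc (k {u,v}) - l"
      have n: "k {z,y} = k {y,z}" by (simp add: insert_commute)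
      have "sub_pt k z y (Suc l) = sub_pt k y z (Suc (k {z,y}) - Suc l)"
        using sub_pt_sym[where k=k and u=z and v=y and i="Suc l"] h uv(2) by simp
      hence "sub_pt k y z j = sub_pt k y z (Suc (k {y,z}) - Suc l)" using B h n by simp
      hence "j = Suc (k {y,z}) - Suc l"
        using sub_pt_inj[where k=k and u=y and v=z and i=j and j="Suc (k {y,z}) - Suc l"] yz ij by simp
      thus ?thesis using h n by (simp add: insert_commute)
    qed
  next
    case True
    have k1: "1 \<le> k {u,v}" using kpos by simp
    have "(y = u \<and> z = v \<and> j = 1) \<or> (y = v \<and> z = u \<and> j = Suc (k {u,v}) - 1)"
      using sub_pt_inj_interior[where k=k and u=u and v=v and u'=y and v'=z and i=1 and i'=j]
        \<open>u \<noteq> v\<close> yz k1 ij(2) B True by simp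
    then show ?thesis
    proof
      assume "y = u \<and> z = v \<and> j = 1" thus ?thesis by simp
    next
      assume h: "y = v \<and> z = u \<and> j = Suc (k {u,v}) - 1"
      have n: "k {z,y} = k {y,z}" by (simp add: insert_commute)
      have "sub_pt k y z i = Inl z" using A True h by (simp add: sub_pt_def)
      moreover have "sub_pt k y z (Suc (k {y,z})) = Inl z" by (simp add: sub_pt_def Let_def)
      ultimately have "i = Suc (k {y,z})"
        using sub_pt_inj[where k=k and u=y and v=z and i=i and j="Suc (k {y,z})"] yz ij by simp
      thus ?thesis using h n by simp
    qed
  qed
qed

lemma traverse:
  assumes kpos: "\<And>e. 1 \<le> k e" and irr: "\<And>u. \<not> E u u"
    and path: "\<And>s. \<gamma> (Suc s) = \<gamma> s \<or> sub_E E k (\<gamma> s) (\<gamma> (Suc s))"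
    and yz: "y \<noteq> z" and st: "s0 \<le> t" and g0: "\<gamma> s0 = Inl y" and gt: "\<gamma> t = Inl z"
    and mid: "\<And>s. s0 < s \<Longrightarrow> s < t \<Longrightarrow> \<gamma> s \<in> sub_pt k y z ` {1..k {y,z}}"
  shows "sub_pt k y z ` {1..k {y,z}} \<subseteq> \<gamma> ` {s0..t}"
proof -
  define n where "n = k {y,z}"
  define P where "P s i \<longleftrightarrow> i \<le> Suc n \<and> \<gamma> s = sub_pt k y z i" for s i
  have ex: "\<exists>i. P s i" if rng: "s0 \<le> s" "s \<le> t" for s
  proof -
    consider "s = s0" | "s = t" | "s0 < s" "s < t" using rng by (metis le_neq_implies_less)
    then show ?thesis
    proof cases
      case 1 thus ?thesis using g0 unfolding P_def by (intro exI[of _ 0]) (simp add: sub_pt_def)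
    next
      case 2 thus ?thesis using gt unfolding P_def n_def
        by (intro exI[of _ "Suc (k {y,z})"]) (simp add: sub_pt_def Let_def)
    next
      case 3
      obtain i where "i \<in> {1..k {y,z}}" "\<gamma> s = sub_pt k y z i" using mid[OF 3] by (rule imageE) auto
      thus ?thesis unfolding P_def n_def by (intro exI[of _ i]) simp
    qed
  qed
  define pos where "pos s = (SOME i. P s i)" for s
  have posP: "P s (pos s)" if "s0 \<le> s" "s \<le> t" for s
    unfolding pos_def using ex[OF that] by (rule someI_ex)
  have uniq: "pos s = i" if "s0 \<le> s" "s \<le> t" "P s i" for s i
  proof -
    have a: "pos s \<le> Suc n" "\<gamma> s = sub_pt k y z (pos s)" using posP[OF that(1,2)] unfolding P_def by auto
    have b: "i \<le> Suc n" "\<gamma> s = sub_pt k y z i" using that(3) unfolding P_def by auto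
    show ?thesis by (rule sub_pt_inj[where k=k, OF yz]) (use a b in \<open>simp_all add: n_def\<close>)
  qed
  have pos0: "pos s0 = 0" using uniq[of s0 0] st g0 unfolding P_def by (simp add: sub_pt_def)
  have post: "pos t = Suc n" using uniq[of t "Suc n"] st gt unfolding P_def n_def
    by (simp add: sub_pt_def Let_def)
  have step: "pos (Suc s) \<le> Suc (pos s)" if "s0 \<le> s" "s < t" for s
  proof -
    have a: "P s (pos s)" "P (Suc s) (pos (Suc s))" using posP that by auto
    from path[of s] show ?thesis
    proof
      assume "\<gamma> (Suc s) = \<gamma> s"
      hence "P s (pos (Suc s))" using a unfolding P_def by simp
      hence "pos s = pos (Suc s)" using uniq that by simp
      thus ?thesis by simp
    next
      assume "sub_E E k (\<gamma> s) (\<gamma> (Suc s))"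
      hence "sub_E E k (sub_pt k y z (pos s)) (sub_pt k y z (pos (Suc s)))"
        using a unfolding P_def by simp
      thus ?thesis using sub_E_step[where k=k and E=E, OF kpos irr yz] a unfolding P_def n_def by blast
    qed
  qed
  have ivt: "\<exists>s. s0 \<le> s \<and> s \<le> t \<and> pos s = j" if "j \<le> Suc n" for j
  proof -
    define Q where "Q s \<longleftrightarrow> s0 \<le> s \<and> s \<le> t \<and> j \<le> pos s" for s
    have "Q t" unfolding Q_def using st post that by simp
    define s1 where "s1 = (LEAST s. Q s)"
    have q1: "Q s1" unfolding s1_def by (rule LeastI[of Q t]) fact
    have nq: "\<not> Q s" if "s < s1" for s using not_less_Least[of s Q] that unfolding s1_def by blast
    show ?thesis
    proof (cases "s1 = s0")
      case True thus ?thesis using q1 pos0 unfolding Q_def by auto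
    next
      case False
      define p where "p = s1 - 1"
      have p: "s1 = Suc p" "s0 \<le> p" using False q1 unfolding Q_def p_def by auto
      have "\<not> Q p" using nq p by simp
      hence "pos p < j" using p q1 unfolding Q_def by auto
      moreover have "pos s1 \<le> Suc (pos p)" using step[of p] p q1 unfolding Q_def by simp
      ultimately show ?thesis using q1 unfolding Q_def by (intro exI[of _ s1]) auto
    qed
  qed
  show ?thesis
  proof
    fix x assume "x \<in> sub_pt k y z ` {1..k {y,z}}"
    then obtain j where j: "j \<in> {1..n}" "x = sub_pt k y z j" unfolding n_def by auto
    then obtain s where "s0 \<le> s" "s \<le> t" "pos s = j" using ivt[of j] by auto
    hence "\<gamma> s = x" using posP[of s] j unfolding P_def by simp
    thus "x \<in> \<gamma> ` {s0..t}" using \<open>s0 \<le> s\<close> \<open>s \<le> t\<close> by auto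
  qed
qed


lemma sub_V_Inr:
  assumes "Inr S \<in> sub_V V E k"
  shows "\<exists>u v i. E u v \<and> 1 \<le> i \<and> i \<le> k {u,v} \<and> Inr S = sub_pt k u v i \<and> fst ` S = {u,v}"
proof -
  obtain u v i where h: "E u v" "1 \<le> i" "i \<le> k {u,v}" "Inr S = sub_pt k u v i"
    using assms unfolding sub_V_def by auto
  have "sub_pt k u v i = Inr {(u,i),(v,Suc (k {u,v}) - i)}"
    by (rule sub_pt_Inr[where k=k and u=u and v=v, OF h(2,3)])
  hence "S = {(u,i),(v,Suc (k {u,v}) - i)}" using h(4) by simp
  hence "fst ` S = {u,v}" by simp
  thus ?thesis using h by blast
qed

lemma sub_pt_interior_fst:
  assumes "x \<in> sub_pt k y z ` {1..k {y,z}}"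
  shows "\<exists>S. x = Inr S \<and> fst ` S = {y,z}"
proof -
  obtain i where i: "1 \<le> i" "i \<le> k {y,z}" "x = sub_pt k y z i" using assms by auto
  have "sub_pt k y z i = Inr {(y,i),(z,Suc (k {y,z}) - i)}"
    by (rule sub_pt_Inr[where k=k and u=y and v=z, OF i(1,2)])
  thus ?thesis using i by auto
qed

lemma sub_V_Inr_interior:
  assumes "Inr S \<in> sub_V V E k" "fst ` S = {y,z}"
  shows "Inr S \<in> sub_pt k y z ` {1..k {y,z}}"
proof -
  obtain u v i where h: "E u v" "1 \<le> i" "i \<le> k {u,v}" "Inr S = sub_pt k u v i" "fst ` S = {u,v}"
    using sub_V_Inr[OF assms(1)] by blast
  have "{u,v} = {y,z}" using h(5) assms(2) by simp
  hence "(u = y \<and> v = z) \<or> (u = z \<and> v = y)" by (simp add: doubleton_eq_iff)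
  thus ?thesis
  proof
    assume "u = y \<and> v = z" thus ?thesis using h by auto
  next
    assume uv: "u = z \<and> v = y"
    have n: "k {z,y} = k {y,z}" by (simp add: insert_commute)
    have "sub_pt k z y i = sub_pt k y z (Suc (k {z,y}) - i)"
      using sub_pt_sym[where k=k and u=z and v=y and i=i] h uv by simp
    moreover have "Suc (k {y,z}) - i \<in> {1..k {y,z}}" using h uv n by auto
    ultimately show ?thesis using h uv n by (metis image_eqI)
  qed
qed

lemma finite_nbrs:
  assumes "simple_graph V E" "locally_finite V E"
  shows "finite {w. E c w}"
proof (cases "c \<in> V")
  case True thus ?thesis using assms(2) unfolding locally_finite_def by auto
next
  case False
  hence "{w. E c w} = {}" using assms(1) unfolding simple_graph_def by auto
  thus ?thesis by simp
qed

lemma infinite_range_path: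
  fixes \<gamma> :: "nat \<Rightarrow> 'b"
  assumes "\<And>v. finite {n. \<gamma> n = v}"
  shows "infinite (range \<gamma>)"
proof
  assume f: "finite (range \<gamma>)"
  have "(UNIV :: nat set) = (\<Union>v\<in>range \<gamma>. {n. \<gamma> n = v})" by auto
  also have "finite \<dots>" using f assms by (intro finite_UN_I) auto
  finally show False by simp
qed

lemma finite_R:
  assumes sg: "simple_graph V E" and lf: "locally_finite V E" and fC: "finite C"
  shows "finite (sub_V V E k \<inter> (Inl ` C \<union> {Inr S | S. fst ` S \<inter> C \<noteq> {}}))"
proof -
  define P where "P = {(u,v). E u v \<and> (u \<in> C \<or> v \<in> C)}"
  have sym: "E u v \<Longrightarrow> E v u" for u v using sg unfolding simple_graph_def by blast
  have "P \<subseteq> (SIGMA u:C. {v. E u v}) \<union> prod.swap ` (SIGMA v:C. {u. E v u})"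
  proof
    fix p assume "p \<in> P"
    then obtain u v where p: "p = (u,v)" "E u v" "u \<in> C \<or> v \<in> C" unfolding P_def by auto
    show "p \<in> (SIGMA u:C. {v. E u v}) \<union> prod.swap ` (SIGMA v:C. {u. E v u})"
    proof (cases "u \<in> C")
      case True thus ?thesis using p by auto
    next
      case False
      hence "(v,u) \<in> (SIGMA v:C. {u. E v u})" using p sym by auto
      hence "prod.swap (v,u) \<in> prod.swap ` (SIGMA v:C. {u. E v u})" by (rule imageI)
      thus ?thesis using p by simp
    qed
  qed
  moreover have "finite ((SIGMA u:C. {v. E u v}) \<union> prod.swap ` (SIGMA v:C. {u. E v u}))"
    using fC finite_nbrs[OF sg lf] by (intro finite_UnI finite_imageI finite_SigmaI) auto
  ultimately have fP: "finite P" by (rule finite_subset)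
  have "sub_V V E k \<inter> (Inl ` C \<union> {Inr S | S. fst ` S \<inter> C \<noteq> {}})
        \<subseteq> Inl ` C \<union> (\<Union>p\<in>P. sub_pt k (fst p) (snd p) ` {1..k {fst p, snd p}})"
  proof
    fix x assume x: "x \<in> sub_V V E k \<inter> (Inl ` C \<union> {Inr S | S. fst ` S \<inter> C \<noteq> {}})"
    show "x \<in> Inl ` C \<union> (\<Union>p\<in>P. sub_pt k (fst p) (snd p) ` {1..k {fst p, snd p}})"
    proof (cases x)
      case (Inl a) thus ?thesis using x by auto
    next
      case (Inr S)
      hence C: "fst ` S \<inter> C \<noteq> {}" using x by auto
      obtain u v i where h: "E u v" "1 \<le> i" "i \<le> k {u,v}" "Inr S = sub_pt k u v i" "fst ` S = {u,v}"
        using sub_V_Inr[of S V E k] x Inr by blast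
      hence "(u,v) \<in> P" using C unfolding P_def by auto
      moreover have "x \<in> sub_pt k u v ` {1..k {u,v}}" using h Inr by auto
      ultimately show ?thesis by force
    qed
  qed
  moreover have "finite (Inl ` C \<union> (\<Union>p\<in>P. sub_pt k (fst p) (snd p) ` {1..k {fst p, snd p}}))"
    using fC fP by auto
  ultimately show ?thesis by (rule finite_subset)
qed

lemma exit_edge:
  assumes sg: "simple_graph V E" and lf: "locally_finite V E" and kpos: "\<And>e. 1 \<le> k e"
    and g: "\<gamma> \<in> paths_to_infinity (sub_V V E k) (sub_E E k) w"
    and fC: "finite C"
    and wl: "\<And>a. w = Inl a \<Longrightarrow> a \<in> C" and wr: "\<And>S. w = Inr S \<Longrightarrow> fst ` S \<subseteq> C"
  shows "\<exists>y z. E y z \<and> z \<notin> C \<and> sub_pt k y z ` {1..k {y,z}} \<subseteq> range \<gamma>"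
proof -
  have g0: "\<gamma> 0 = w" and gV: "\<And>n. \<gamma> n \<in> sub_V V E k"
    and gs: "\<And>s. \<gamma> (Suc s) = \<gamma> s \<or> sub_E E k (\<gamma> s) (\<gamma> (Suc s))"
    and gf: "\<And>v. finite {n. \<gamma> n = v}"
    using g unfolding paths_to_infinity_def by auto
  have irr: "\<And>u. \<not> E u u" and sym: "\<And>u v. E u v \<Longrightarrow> E v u"
    using sg unfolding simple_graph_def by blast+
  define R where "R = sub_V V E k \<inter> (Inl ` C \<union> {Inr S | S. fst ` S \<inter> C \<noteq> {}})"
  have fR: "finite R" unfolding R_def by (rule finite_R[OF sg lf fC])
  have "\<exists>t. \<gamma> t \<notin> R"
  proof (rule ccontr)
    assume "\<not> (\<exists>t. \<gamma> t \<notin> R)"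
    hence "range \<gamma> \<subseteq> R" by auto
    hence "finite (range \<gamma>)" using fR finite_subset by blast
    thus False using infinite_range_path[of \<gamma>] gf by blast
  qed
  define t1 where "t1 = (LEAST t. \<gamma> t \<notin> R)"
  have ht1: "\<gamma> t1 \<notin> R" unfolding t1_def using \<open>\<exists>t. \<gamma> t \<notin> R\<close> by (rule LeastI_ex)
  have before: "\<gamma> s \<in> R" if "s < t1" for s using not_less_Least[of s "\<lambda>t. \<gamma> t \<notin> R"] that
    unfolding t1_def by blast
  have wR: "w \<in> R"
  proof (cases w)
    case (Inl a) thus ?thesis using wl gV[of 0] g0 unfolding R_def by auto
  next
    case (Inr S)
    obtain u v i where "fst ` S = {u,v}" using sub_V_Inr[of S V E k] gV[of 0] g0 Inr by metis
    hence "fst ` S \<inter> C \<noteq> {}" using wr[OF Inr] by auto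
    thus ?thesis using gV[of 0] g0 Inr unfolding R_def by auto
  qed
  have "t1 \<noteq> 0" using ht1 wR g0 by (metis)
  define p where "p = t1 - 1"
  have t1p: "t1 = Suc p" using \<open>t1 \<noteq> 0\<close> unfolding p_def by simp
  have pR: "\<gamma> p \<in> R" using before t1p by simp
  have "\<gamma> (Suc p) \<noteq> \<gamma> p" using pR ht1 t1p by auto
  hence sE: "sub_E E k (\<gamma> p) (\<gamma> (Suc p))" using gs[of p] by auto
  show ?thesis
  proof (cases "\<gamma> (Suc p)")
    case (Inr S')
    have d: "fst ` S' \<inter> C = {}" using ht1 t1p gV[of "Suc p"] Inr unfolding R_def by auto
    from sub_E_Inr[of E k "\<gamma> p" S'] sE Inr
    have "(\<exists>a. \<gamma> p = Inl a \<and> a \<in> fst ` S') \<or> (\<exists>S. \<gamma> p = Inr S \<and> fst ` S = fst ` S')" by simp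
    hence False
    proof (elim disjE exE conjE)
      fix a assume a: "\<gamma> p = Inl a" "a \<in> fst ` S'"
      hence "a \<in> C" using pR unfolding R_def by auto
      thus False using d a(2) by blast
    next
      fix S assume a: "\<gamma> p = Inr S" "fst ` S = fst ` S'"
      hence "fst ` S \<inter> C \<noteq> {}" using pR unfolding R_def by auto
      thus False using d a(2) by simp
    qed
    thus ?thesis ..
  next
    case (Inl z)
    have zC: "z \<notin> C" using ht1 t1p gV[of "Suc p"] Inl unfolding R_def by auto
    obtain S where S: "\<gamma> p = Inr S" "z \<in> fst ` S"
      using sub_E_Inl[of k E "\<gamma> p" z] kpos sE Inl by auto
    obtain u v i where uv: "E u v" "fst ` S = {u,v}" using sub_V_Inr[of S V E k] gV[of p] S by metis
    have SC: "fst ` S \<inter> C \<noteq> {}" using pR S unfolding R_def by auto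
    obtain y where y: "fst ` S = {y,z}" "E y z" "y \<in> C"
    proof (cases "z = u")
      case True thus ?thesis using that[of v] uv sym SC zC by (auto simp: insert_commute)
    next
      case False hence "z = v" using S uv by auto
      thus ?thesis using that[of u] uv SC zC by auto
    qed
    have yz: "y \<noteq> z" using y zC by auto
    define I where "I = sub_pt k y z ` {1..k {y,z}}"
    have pI: "\<gamma> p \<in> I" unfolding I_def using sub_V_Inr_interior[of S V E k y z] gV[of p] S y by simp
    have "\<gamma> 0 \<notin> I"
    proof
      assume "\<gamma> 0 \<in> I"
      then obtain S0 where "\<gamma> 0 = Inr S0" "fst ` S0 = {y,z}"
        using sub_pt_interior_fst unfolding I_def by metis
      thus False using wr[of S0] g0 zC by auto
    qed
    define Q where "Q s \<longleftrightarrow> s \<le> p \<and> \<gamma> s \<notin> I" for s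
    define s0 where "s0 = (GREATEST s. Q s)"
    have Q0: "Q 0" unfolding Q_def using \<open>\<gamma> 0 \<notin> I\<close> by simp
    have hs0: "Q s0" unfolding s0_def by (rule GreatestI_nat[of Q 0 p]) (use Q0 in \<open>auto simp: Q_def\<close>)
    have after: "\<gamma> s \<in> I" if "s0 < s" "s \<le> p" for s
    proof (rule ccontr)
      assume "\<gamma> s \<notin> I"
      hence "Q s" using that unfolding Q_def by simp
      hence "s \<le> s0" unfolding s0_def by (rule Greatest_le_nat[of Q s p]) (auto simp: Q_def)
      thus False using that by simp
    qed
    have "s0 < p" using hs0 pI unfolding Q_def by (auto simp: le_less)
    hence "\<gamma> (Suc s0) \<in> I" using after by simp
    then obtain S1 where S1: "\<gamma> (Suc s0) = Inr S1" "fst ` S1 = {y,z}"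
      using sub_pt_interior_fst unfolding I_def by metis
    have "\<gamma> (Suc s0) \<noteq> \<gamma> s0" using hs0 \<open>\<gamma> (Suc s0) \<in> I\<close> unfolding Q_def by auto
    hence "sub_E E k (\<gamma> s0) (Inr S1)" using gs[of s0] S1 by auto
    hence "(\<exists>a. \<gamma> s0 = Inl a \<and> a \<in> fst ` S1) \<or> (\<exists>S. \<gamma> s0 = Inr S \<and> fst ` S = fst ` S1)"
      using sub_E_Inr[of E k "\<gamma> s0" S1] by simp
    moreover have "\<not> (\<exists>S. \<gamma> s0 = Inr S \<and> fst ` S = fst ` S1)"
    proof
      assume "\<exists>S. \<gamma> s0 = Inr S \<and> fst ` S = fst ` S1"
      then obtain S where "\<gamma> s0 = Inr S" "fst ` S = {y,z}" using S1 by auto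
      hence "\<gamma> s0 \<in> I" using sub_V_Inr_interior[of S V E k y z] gV[of s0] unfolding I_def by simp
      thus False using hs0 unfolding Q_def by simp
    qed
    ultimately obtain a where a: "\<gamma> s0 = Inl a" "a \<in> {y,z}" using S1 by auto
    have "\<gamma> s0 \<in> R" using before \<open>s0 < p\<close> t1p by simp
    hence "a \<noteq> z" using a zC unfolding R_def by auto
    hence gs0: "\<gamma> s0 = Inl y" using a by auto
    have "I \<subseteq> \<gamma> ` {s0..Suc p}" unfolding I_def
    proof (rule traverse[where k=k and E=E and \<gamma>=\<gamma> and y=y and z=z, OF kpos irr gs yz])
      show "s0 \<le> Suc p" using \<open>s0 < p\<close> by simp
      show "\<gamma> s0 = Inl y" by (rule gs0)
      show "\<gamma> (Suc p) = Inl z" by (rule Inl)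
      show "\<gamma> s \<in> sub_pt k y z ` {1..k {y, z}}" if "s0 < s" "s < Suc p" for s
        using after[of s] that unfolding I_def by simp
    qed
    hence "I \<subseteq> range \<gamma>" by auto
    thus ?thesis using y zC unfolding I_def by blast
  qed
qed


lemma countable_V:
  assumes "graph V E"
  shows "countable V"
proof -
  have sg: "simple_graph V E" and lf: "locally_finite V E" and cg: "connected_graph V E"
    using assms unfolding graph_def by auto
  obtain r where r: "r \<in> V" using cg unfolding connected_graph_def by auto
  have fin: "finite {v. (E ^^ n) r v}" for n
  proof (induction n)
    case 0 thus ?case by simp
  next
    case (Suc n)
    have "{v. (E ^^ Suc n) r v} = (\<Union>y\<in>{v. (E ^^ n) r v}. {v. E y v})"
      by (auto simp: relpowp_Suc_right)
    thus ?case using Suc finite_nbrs[OF sg lf] by simp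
  qed
  have "V \<subseteq> (\<Union>n. {v. (E ^^ n) r v})"
    using cg r unfolding connected_graph_def by (auto simp: rtranclp_power)
  moreover have "countable (\<Union>n. {v. (E ^^ n) r v})"
    using fin by (intro countable_UN) (auto intro: countable_finite)
  ultimately show ?thesis by (rule countable_subset)
qed

lemma countable_Ed:
  assumes "graph V E"
  shows "countable {{u,v} | u v. E u v}"
proof -
  have "{{u,v} | u v. E u v} \<subseteq> (\<lambda>(u,v). {u,v}) ` (V \<times> V)"
    using assms unfolding graph_def simple_graph_def by auto
  moreover have "countable ((\<lambda>(u,v). {u,v}) ` (V \<times> V))"
    using countable_V[OF assms] by auto
  ultimately show ?thesis by (rule countable_subset)
qed

lemma ensum_ge: "finite F \<Longrightarrow> F \<subseteq> A \<Longrightarrow> (\<Sum>v\<in>F. ennreal (f v)) \<le> ensum f A"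
  unfolding ensum_def by (rule SUP_upper) auto

lemma ensum_le: "(\<And>F. finite F \<Longrightarrow> F \<subseteq> A \<Longrightarrow> (\<Sum>v\<in>F. ennreal (f v)) \<le> B) \<Longrightarrow> ensum f A \<le> B"
  unfolding ensum_def by (rule SUP_least) auto

lemma ennreal_nat_unbounded:
  fixes L :: ennreal
  assumes "\<And>N::nat. ennreal (real N) \<le> L"
  shows "L = top"
proof (rule ccontr)
  assume "L \<noteq> top"
  then obtain r where r: "L = ennreal r" "0 \<le> r" by (cases L rule: ennreal_cases) auto
  define N where "N = nat (ceiling r) + 1"
  have "ennreal (real N) \<le> ennreal r" using assms[of N] r by simp
  hence "real N \<le> r" using r by (simp add: ennreal_le_iff)
  moreover have "r < real N" unfolding N_def by linarith
  ultimately show False by simp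
qed


definition intr :: "'a set \<Rightarrow> ('a \<Rightarrow> 'a \<Rightarrow> bool) \<Rightarrow> ('a set \<Rightarrow> nat) \<Rightarrow> 'a set \<Rightarrow> ('a + ('a \<times> nat) set) set" where
  "intr V E k e = {x \<in> sub_V V E k. \<exists>S. x = Inr S \<and> fst ` S = e}"

definition mm :: "('a set \<Rightarrow> nat) \<Rightarrow> 'a + ('a \<times> nat) set \<Rightarrow> real" where
  "mm k x = (case x of Inl _ \<Rightarrow> 0 | Inr S \<Rightarrow> 1 / real (k (fst ` S)))"

lemma intr_eq:
  assumes "E y z"
  shows "intr V E k {y,z} = sub_pt k y z ` {1..k {y,z}}"
proof
  show "intr V E k {y,z} \<subseteq> sub_pt k y z ` {1..k {y,z}}"
    unfolding intr_def using sub_V_Inr_interior[of _ V E k y z] by auto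
next
  show "sub_pt k y z ` {1..k {y,z}} \<subseteq> intr V E k {y,z}"
  proof
    fix x assume x: "x \<in> sub_pt k y z ` {1..k {y,z}}"
    have "x \<in> sub_V V E k" using x assms unfolding sub_V_def by auto
    moreover have "\<exists>S. x = Inr S \<and> fst ` S = {y,z}" using x by (rule sub_pt_interior_fst)
    ultimately show "x \<in> intr V E k {y,z}" unfolding intr_def by auto
  qed
qed

lemma card_intr:
  assumes "E y z" "y \<noteq> z"
  shows "card (intr V E k {y,z}) = k {y,z}" "finite (intr V E k {y,z})"
proof -
  have "inj_on (sub_pt k y z) {1..k {y,z}}"
    using inj_on_sub_pt[OF assms(2), of k] by (rule inj_on_subset) auto
  thus "card (intr V E k {y,z}) = k {y,z}" unfolding intr_eq[where E=E and y=y and z=z and V=V and k=k, OF assms(1)] by (simp add: card_image)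
  show "finite (intr V E k {y,z})" unfolding intr_eq[where E=E and y=y and z=z and V=V and k=k, OF assms(1)] by simp
qed

lemma mm_intr: "x \<in> intr V E k e \<Longrightarrow> mm k x = 1 / real (k e)"
  unfolding intr_def mm_def by auto

lemma intr_disj: "e \<noteq> e' \<Longrightarrow> intr V E k e \<inter> intr V E k e' = {}"
  unfolding intr_def by auto

lemma sum_intr:
  assumes "E y z" "y \<noteq> z" "1 \<le> k {y,z}"
  shows "(\<Sum>x\<in>intr V E k {y,z}. mm k x) = 1"
    "(\<Sum>x\<in>intr V E k {y,z}. (mm k x)^2) = 1 / real (k {y,z})"
proof -
  have "(\<Sum>x\<in>intr V E k {y,z}. mm k x) = (\<Sum>x\<in>intr V E k {y,z}. 1 / real (k {y,z}))"
    by (rule sum.cong) (auto simp: mm_intr)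
  also have "\<dots> = 1" using card_intr[where E=E and y=y and z=z and V=V and k=k, OF assms(1,2)] assms(3) by simp
  finally show "(\<Sum>x\<in>intr V E k {y,z}. mm k x) = 1" .
  have "(\<Sum>x\<in>intr V E k {y,z}. (mm k x)^2) = (\<Sum>x\<in>intr V E k {y,z}. (1 / real (k {y,z}))^2)"
    by (rule sum.cong) (auto simp: mm_intr)
  also have "\<dots> = 1 / real (k {y,z})" using card_intr[where E=E and y=y and z=z and V=V and k=k, OF assms(1,2)] assms(3)
    by (simp add: power2_eq_square)
  finally show "(\<Sum>x\<in>intr V E k {y,z}. (mm k x)^2) = 1 / real (k {y,z})" .
qed

lemma mm_nonneg: "0 \<le> mm k x"
  unfolding mm_def by (auto split: sum.splits)



lemma length_inf:
  assumes gr: "graph V E" and kpos: "\<And>e. 1 \<le> k e"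
    and wV: "w \<in> sub_V V E k"
    and g: "\<gamma> \<in> paths_to_infinity (sub_V V E k) (sub_E E k) w"
  shows "m_length (mm k) \<gamma> = top"
proof -
  have sg: "simple_graph V E" and lf: "locally_finite V E" using gr unfolding graph_def by auto
  have irr: "\<And>u. \<not> E u u" using sg unfolding simple_graph_def by blast
  have g0: "\<gamma> 0 = w" using g unfolding paths_to_infinity_def by auto
  define T where "T = {e. \<exists>y z. e = {y,z} \<and> E y z \<and> intr V E k e \<subseteq> range \<gamma>}"
  have infT: "infinite T"
  proof
    assume fT: "finite T"
    define Cw where "Cw = (case w of Inl a \<Rightarrow> {a} | Inr S \<Rightarrow> fst ` S)"
    have fCw: "finite Cw"
    proof (cases w)
      case (Inl a) thus ?thesis unfolding Cw_def by simp
    next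
      case (Inr S)
      obtain u v i where "fst ` S = {u,v}" using sub_V_Inr[of S V E k] wV Inr by metis
      thus ?thesis unfolding Cw_def Inr by simp
    qed
    define C where "C = \<Union>T \<union> Cw"
    have fTe: "finite e" if "e \<in> T" for e using that unfolding T_def by auto
    have fC: "finite C" unfolding C_def using fT fTe fCw by auto
    have wl: "a \<in> C" if "w = Inl a" for a using that unfolding C_def Cw_def by simp
    have wr: "fst ` S \<subseteq> C" if "w = Inr S" for S using that unfolding C_def Cw_def by simp
    obtain y z where yz: "E y z" "z \<notin> C" "sub_pt k y z ` {1..k {y,z}} \<subseteq> range \<gamma>"
      using exit_edge[OF sg lf kpos g fC wl wr] by blast
    have "intr V E k {y,z} \<subseteq> range \<gamma>"
      using yz(3) intr_eq[where E=E and y=y and z=z and V=V and k=k, OF yz(1)] by simp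
    hence "{y,z} \<in> T" unfolding T_def mem_Collect_eq
      by (intro exI[of _ y] exI[of _ z] conjI refl yz(1))
    hence "z \<in> C" unfolding C_def by auto
    thus False using yz by simp
  qed
  have "ennreal (real N) \<le> m_length (mm k) \<gamma>" for N
  proof -
    obtain T' where T': "finite T'" "card T' = N" "T' \<subseteq> T"
      using infinite_arbitrarily_large[OF infT] by blast
    define F where "F = \<Union>(intr V E k ` T')"
    have eT: "\<exists>y z. e = {y,z} \<and> E y z \<and> y \<noteq> z" if eI: "e \<in> T'" for e
    proof -
      have "e \<in> T" using eI T'(3) by auto
      then obtain y z where yz: "e = {y,z}" "E y z" unfolding T_def by blast
      have "y \<noteq> z" using irr yz(2) by metis
      show ?thesis by (intro exI[of _ y] exI[of _ z] conjI yz \<open>y \<noteq> z\<close>)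
    qed
    have finI: "finite (intr V E k e)" if eI: "e \<in> T'" for e
    proof -
      obtain y z where "e = {y,z}" "E y z" "y \<noteq> z" using eT[OF eI] by blast
      thus ?thesis using card_intr(2)[where E=E and y=y and z=z and V=V and k=k] by simp
    qed
    have s1: "(\<Sum>x\<in>intr V E k e. mm k x) = 1" if eI: "e \<in> T'" for e
    proof -
      obtain y z where "e = {y,z}" "E y z" "y \<noteq> z" using eT[OF eI] by blast
      thus ?thesis using sum_intr(1)[where E=E and y=y and z=z and V=V and k=k] kpos by simp
    qed
    have fF: "finite F" unfolding F_def using T'(1) finI by auto
    have FR: "F \<subseteq> range \<gamma>" unfolding F_def using T'(3) unfolding T_def by auto
    have "(\<Sum>x\<in>F. mm k x) = (\<Sum>e\<in>T'. (\<Sum>x\<in>intr V E k e. mm k x))"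
      unfolding F_def by (rule sum.UNION_disjoint[OF T'(1)]) (simp_all add: finI intr_disj)
    also have "\<dots> = real N" using s1 T'(2) by simp
    finally have "(\<Sum>x\<in>F. ennreal (mm k x)) = ennreal (real N)"
      using sum_ennreal[of F "mm k", OF mm_nonneg] by simp
    moreover have "(\<Sum>x\<in>F. ennreal (mm k x)) \<le> m_length (mm k) \<gamma>"
      unfolding m_length_def by (rule ensum_ge[OF fF FR])
    ultimately show ?thesis by simp
  qed
  thus ?thesis by (rule ennreal_nat_unbounded)
qed



lemma area_bound:
  assumes gr: "graph V E"
    and kdef: "k = (\<lambda>e. 2 ^ to_nat_on {{u,v} | u v. E u v} e)"
  shows "area (sub_V V E k) (mm k) \<le> 2"
proof -
  define Ed where "Ed = {{u,v} | u v. E u v}"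
  have cEd: "countable Ed" unfolding Ed_def by (rule countable_Ed[OF gr])
  have injEd: "inj_on (to_nat_on Ed) Ed" by (rule inj_on_to_nat_on[OF cEd])
  have kE: "k e = 2 ^ to_nat_on Ed e" for e unfolding kdef Ed_def by simp
  have irr: "\<And>u. \<not> E u u" using gr unfolding graph_def simple_graph_def by blast
  define f where "f x = (mm k x)^2" for x
  have real_bound: "(\<Sum>x\<in>F. f x) \<le> 2" if fF: "finite F" and FV: "F \<subseteq> sub_V V E k" for F
  proof -
    define FR where "FR = {x\<in>F. \<not> isl x}"
    define EF where "EF = (\<lambda>x. fst ` projr x) ` FR"
    have fEF: "finite EF" unfolding EF_def FR_def using fF by simp
    have EFe: "\<exists>u v. e = {u,v} \<and> E u v \<and> u \<noteq> v" if eI: "e \<in> EF" for e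
    proof -
      obtain x where x: "x \<in> F" "\<not> isl x" "e = fst ` projr x" using eI unfolding EF_def FR_def by auto
      then obtain S where S: "x = Inr S" by (cases x) auto
      obtain u v i where uv: "E u v" "fst ` S = {u,v}" using sub_V_Inr[of S V E k] FV x(1) S by blast
      have "u \<noteq> v" using irr uv(1) by metis
      moreover have "e = {u,v}" using x(3) S uv(2) by simp
      ultimately show ?thesis using uv(1) by (intro exI[of _ u] exI[of _ v] conjI)
    qed
    have EFEd: "EF \<subseteq> Ed" using EFe unfolding Ed_def by blast
    define F' where "F' = \<Union>(intr V E k ` EF)"
    have finI: "finite (intr V E k e)" if eI: "e \<in> EF" for e
    proof -
      obtain y z where "e = {y,z}" "E y z" "y \<noteq> z" using EFe[OF eI] by blast
      thus ?thesis using card_intr(2)[where E=E and y=y and z=z and V=V and k=k] by simp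
    qed
    have s2: "(\<Sum>x\<in>intr V E k e. f x) = (1/2) ^ to_nat_on Ed e" if eI: "e \<in> EF" for e
    proof -
      obtain y z where yz: "e = {y,z}" "E y z" "y \<noteq> z" using EFe[OF eI] by blast
      have "1 \<le> k {y,z}" unfolding kE by simp
      hence "(\<Sum>x\<in>intr V E k e. f x) = 1 / real (k e)"
        using sum_intr(2)[where E=E and y=y and z=z and V=V and k=k] yz unfolding f_def by simp
      also have "\<dots> = (1/2) ^ to_nat_on Ed e" unfolding kE by (simp add: power_one_over)
      finally show ?thesis .
    qed
    have fF': "finite F'" unfolding F'_def using fEF finI by auto
    have "(\<Sum>x\<in>F. f x) = (\<Sum>x\<in>FR. f x)"
      by (rule sum.mono_neutral_right[OF fF]) (auto simp: FR_def f_def mm_def split: sum.splits)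
    also have "\<dots> \<le> (\<Sum>x\<in>F'. f x)"
    proof (rule sum_mono2[OF fF'])
      show "FR \<subseteq> F'"
      proof
        fix x assume x: "x \<in> FR"
        then obtain S where S: "x = Inr S" unfolding FR_def by (cases x) auto
        have "x \<in> intr V E k (fst ` S)" using x S FV unfolding FR_def intr_def by auto
        moreover have "fst ` S \<in> EF" using x S unfolding EF_def by force
        ultimately show "x \<in> F'" unfolding F'_def by auto
      qed
      show "0 \<le> f b" for b unfolding f_def by simp
    qed
    also have "\<dots> = (\<Sum>e\<in>EF. (\<Sum>x\<in>intr V E k e. f x))"
      unfolding F'_def by (rule sum.UNION_disjoint[OF fEF]) (simp_all add: finI intr_disj)
    also have "\<dots> = (\<Sum>e\<in>EF. (1/2::real) ^ to_nat_on Ed e)" using s2 by simp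
    also have "\<dots> = (\<Sum>j\<in>to_nat_on Ed ` EF. (1/2::real) ^ j)"
      using sum.reindex[of "to_nat_on Ed" EF "\<lambda>j. (1/2::real) ^ j"] inj_on_subset[OF injEd EFEd]
      by simp
    also have "\<dots> \<le> (\<Sum>j. (1/2::real) ^ j)"
      by (rule sum_le_suminf) (auto intro: summable_geometric simp: fEF)
    also have "\<dots> = 2" using suminf_geometric[of "1/2::real"] by simp
    finally show ?thesis .
  qed
  show ?thesis unfolding area_def
  proof (rule ensum_le)
    fix F assume F: "finite F" "F \<subseteq> sub_V V E k"
    have "(\<Sum>x\<in>F. ennreal ((mm k x)\<^sup>2)) = ennreal (\<Sum>x\<in>F. f x)"
      unfolding f_def by (rule sum_ennreal) simp
    also have "\<dots> \<le> ennreal 2" using real_bound[OF F] by (rule ennreal_leI)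
    finally show "(\<Sum>x\<in>F. ennreal ((mm k x)\<^sup>2)) \<le> 2" by simp
  qed
qed



lemma exists_edge:
  assumes gr: "graph V E" and inf: "infinite V"
  shows "\<exists>u y. E u y"
proof -
  obtain a where a: "a \<in> V" using inf infinite_imp_nonempty by blast
  have "infinite (V - {a})" using inf by simp
  then obtain b where b: "b \<in> V - {a}" using infinite_imp_nonempty by blast
  have "E\<^sup>*\<^sup>* a b" using gr a b unfolding graph_def connected_graph_def by blast
  moreover have "a \<noteq> b" using b by auto
  ultimately show ?thesis by (metis converse_rtranclpE)
qed

theorem mainTheorem8:
  fixes V :: "'a set" and E :: "'a \<Rightarrow> 'a \<Rightarrow> bool"
  assumes "graph V E" and "infinite V"
  shows "\<exists>k :: 'a set \<Rightarrow> nat. \<forall>w \<in> sub_V V E k. VEL_parabolic (sub_V V E k) (sub_E E k) w"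
proof -
  have gr: "graph V E" by fact
  define k :: "'a set \<Rightarrow> nat" where "k = (\<lambda>e. 2 ^ to_nat_on {{u,v} | u v. E u v} e)"
  have kpos: "\<And>e. 1 \<le> k e" unfolding k_def by (simp add: one_le_power)
  have aB: "area (sub_V V E k) (mm k) \<le> 2" by (rule area_bound[OF gr k_def])
  have irr: "\<And>u. \<not> E u u" using gr unfolding graph_def simple_graph_def by blast
  obtain u y where uy: "E u y" using exists_edge[OF assms] by blast
  have "u \<noteq> y" using uy irr by metis
  define x0 where "x0 = sub_pt k u y 1"
  have "x0 \<in> intr V E k {u,y}" unfolding x0_def
    using intr_eq[where E=E and y=u and z=y and V=V and k=k, OF uy] kpos[of "{u,y}"] by simp
  hence x0V: "x0 \<in> sub_V V E k" and mx0: "mm k x0 = 1 / real (k {u,y})"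
    unfolding intr_def using mm_intr by (auto simp: mm_def)
  have "0 < mm k x0" unfolding mx0 using kpos[of "{u,y}"] by simp
  hence "0 < ennreal ((mm k x0)^2)" by simp
  also have "ennreal ((mm k x0)^2) = (\<Sum>x\<in>{x0}. ennreal ((mm k x)^2))" by simp
  also have "\<dots> \<le> area (sub_V V E k) (mm k)" unfolding area_def
    by (rule ensum_ge) (use x0V in auto)
  finally have apos: "0 < area (sub_V V E k) (mm k)" .
  have afin: "area (sub_V V E k) (mm k) < top" using aB
    by (metis ennreal_numeral ennreal_less_top le_less_trans)
  have mem: "mm k \<in> vertex_metrics (sub_V V E k)"
    unfolding vertex_metrics_def using apos afin mm_nonneg by auto
  show ?thesis
  proof (intro exI[of _ k] ballI)
    fix w assume w: "w \<in> sub_V V E k"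
    have I: "(INF \<gamma>\<in>paths_to_infinity (sub_V V E k) (sub_E E k) w. m_length (mm k) \<gamma>) = top"
      unfolding INF_top_conv using length_inf[OF gr kpos w] by blast
    have "(INF \<gamma>\<in>paths_to_infinity (sub_V V E k) (sub_E E k) w. m_length (mm k) \<gamma>)\<^sup>2
            / area (sub_V V E k) (mm k) = top"
      unfolding I using afin by (simp add: ennreal_top_divide power_top_ennreal)
    moreover have "(INF \<gamma>\<in>paths_to_infinity (sub_V V E k) (sub_E E k) w. m_length (mm k) \<gamma>)\<^sup>2
            / area (sub_V V E k) (mm k) \<le> VEL (sub_V V E k) (sub_E E k) w"
      unfolding VEL_def by (rule SUP_upper[OF mem])
    ultimately show "VEL_parabolic (sub_V V E k) (sub_E E k) w"
      unfolding VEL_parabolic_def by (simp add: top_unique)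
  qed
qed

end
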